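(* Let $X$ and $Y$ be topological vector spaces (over $\mathbb{R}$), let $\theta$ be the origin of $Y$, let $D$ be a nonempty convex subset of $X$, and let $K$ be a nonempty set. Let $F: D\times K \rightrightarrows Y$ and $G: D\times D\rightrightarrows Y$ be set-valued mappings satisfying: (i) for each $y\in K$, the set $\{x\in D: \theta\in F(x,y)\}$ is compactly closed; (ii) $G$ is a KKM-type mapping on $D$; (iii) for each $y\in K$ there exists $z\in D$ such that for all $x\in D$, $\theta\in G(z,x)$ implies $\theta\in F(x,y)$; (iv) there exist a nonempty compact subset $M$ of $D$ and a point $y_0\in K$ such that $\theta\notin F(x,y_0)$ for all $x\in D\setminus M$. Then there exists $\bar x\in M$ such that $\theta\in F(\bar x,y)$ for all $y\in K$.
   Context: A subset $A$ of a topological space $X$ is compactly closed if for every compact subset $M$ of $X$ the set $A\cap M$ is closed in $M$. A set-valued mapping $G: D\times D\rightrightarrows Y$ is called a KKM-type mapping on $D$ if for every finite subset $\{x_1,\dots,x_n\}\subset D$ and every $x\in \operatorname{co}\{x_1,\dots,x_n\}\cap D$ there exists $j\in\{1,\dots,n\}$ such that $\theta\in G(x_j,x)$. Here $\operatorname{co}$ denotes the convex hull. *)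

theory Defs
  imports "HOL-Analysis.Analysis"
begin

class real_tvs = real_vector + topological_space +
  assumes tvs_add_continuous:
    "((\<lambda>p. fst p + snd p) \<longlongrightarrow> x + y) (nhds x \<times>\<^sub>F nhds y)"
  assumes tvs_scaleR_continuous:
    "((\<lambda>p. fst p *\<^sub>R snd p) \<longlongrightarrow> c *\<^sub>R x) (nhds c \<times>\<^sub>F nhds x)"

definition compactly_closed :: "'a::topological_space set \<Rightarrow> bool" where
  "compactly_closed A \<longleftrightarrow> (\<forall>M. compact M \<longrightarrow> closedin (top_of_set M) (A \<inter> M))"

definition KKM_type :: "('a::real_vector \<Rightarrow> 'a \<Rightarrow> 'y::zero set) \<Rightarrow> 'a set \<Rightarrow> bool" where
  "KKM_type G D \<longleftrightarrow>
     (\<forall>S. finite S \<and> S \<noteq> {} \<and> S \<subseteq> D \<longrightarrow>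
        (\<forall>x \<in> convex hull S \<inter> D. \<exists>xj \<in> S. (0::'y) \<in> G xj x))"

end

theory Submission
  imports Defs "HOL-Homology.Homology"
begin

lemma nsphere_eq: "nsphere p = top_of_set {x. (\<Sum>i\<le>p. x i^2) = 1 \<and> (\<forall>i>p. x i = 0)}"
  by (simp add: nsphere euclidean_product_topology)

lemma sum_sq_zero:
  fixes v :: "nat \<Rightarrow> real"
  assumes "(\<Sum>i\<le>p. v i^2) = 0" "i \<le> p" shows "v i = 0"
  using assms sum_nonneg_eq_0_iff[of "{..p}" "\<lambda>i. v i^2"] by simp

lemma sph_norm:
  fixes v :: "nat \<Rightarrow> real"
  assumes "(\<Sum>i\<le>p. v i^2) > 0"
  shows "(\<Sum>i\<le>p. (v i / sqrt (\<Sum>j\<le>p. v j^2))^2) = 1"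
proof -
  have "(\<Sum>i\<le>p. (v i / sqrt (\<Sum>j\<le>p. v j^2))^2) = (\<Sum>i\<le>p. v i^2) / (\<Sum>j\<le>p. v j^2)"
    using assms by (simp add: power_divide flip: sum_divide_distrib)
  also have "\<dots> = 1" using assms by simp
  finally show ?thesis .
qed

lemma brouwer_ball_nat:
  fixes f :: "(nat \<Rightarrow> real) \<Rightarrow> (nat \<Rightarrow> real)"
  assumes contf: "continuous_on {x. (\<Sum>i\<le>p. x i^2) \<le> 1 \<and> (\<forall>i>p. x i = 0)} f"
    and fB: "f ` {x. (\<Sum>i\<le>p. x i^2) \<le> 1 \<and> (\<forall>i>p. x i = 0)} \<subseteq> {x. (\<Sum>i\<le>p. x i^2) \<le> 1 \<and> (\<forall>i>p. x i = 0)}"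
  shows "\<exists>x\<in>{x. (\<Sum>i\<le>p. x i^2) \<le> 1 \<and> (\<forall>i>p. x i = 0)}. f x = x"
proof (rule ccontr)
  define Bl where "Bl = {x::nat\<Rightarrow>real. (\<Sum>i\<le>p. x i^2) \<le> 1 \<and> (\<forall>i>p. x i = 0)}"
  define Sph where "Sph = {x::nat\<Rightarrow>real. (\<Sum>i\<le>p. x i^2) = 1 \<and> (\<forall>i>p. x i = 0)}"
  assume "\<not> (\<exists>x\<in>{x. (\<Sum>i\<le>p. x i^2) \<le> 1 \<and> (\<forall>i>p. x i = 0)}. f x = x)"
  then have nf: "\<And>x. x \<in> Bl \<Longrightarrow> f x \<noteq> x" unfolding Bl_def by blast
  have contf: "continuous_on Bl f" and fB: "\<And>x. x \<in> Bl \<Longrightarrow> f x \<in> Bl"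
    using contf fB unfolding Bl_def by auto
  have SB: "Sph \<subseteq> Bl" unfolding Sph_def Bl_def by auto
  have fBi: "f x i = 0" if "x \<in> Bl" "i > p" for x i
    using fB[OF that(1)] that(2) unfolding Bl_def by auto
  have fBs: "(\<Sum>i\<le>p. f x i^2) \<le> 1" if "x \<in> Bl" for x
    using fB[OF that(1)] unfolding Bl_def by auto
  have pos1: "(\<Sum>j\<le>p. (x j - t * f x j)^2) > 0" if t: "t \<in> {0..1}" and x: "x \<in> Sph" for t x
  proof (rule ccontr)
    assume "\<not> ?thesis"
    moreover have "0 \<le> (\<Sum>j\<le>p. (x j - t * f x j)^2)" by (intro sum_nonneg) simp
    ultimately have z: "(\<Sum>j\<le>p. (x j - t * f x j)^2) = 0" by linarith
    have xe: "x j = t * f x j" if "j \<le> p" for j using sum_sq_zero[OF z that] by simp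
    have xB: "x \<in> Bl" using x SB by auto
    have "1 = (\<Sum>j\<le>p. x j^2)" using x unfolding Sph_def by auto
    also have "\<dots> = (\<Sum>j\<le>p. t^2 * f x j^2)" by (intro sum.cong refl) (simp add: xe power_mult_distrib)
    also have "\<dots> = t^2 * (\<Sum>j\<le>p. f x j^2)" by (simp add: sum_distrib_left)
    also have "\<dots> \<le> t^2 * 1" using fBs[OF xB] by (intro mult_left_mono) auto
    finally have "t^2 \<ge> 1" by simp
    with t have t1: "t = 1"
      proof -
      have "t * t \<le> t" using t by (intro mult_left_le) auto
      then show ?thesis using \<open>t^2 \<ge> 1\<close> t by (simp add: power2_eq_square)
    qed
    have "f x = x"
    proof
      fix j show "f x j = x j"
        using xe[of j] t1 fBi[OF xB, of j] x unfolding Sph_def by (cases "j \<le> p") auto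
    qed
    with nf xB show False by blast
  qed
  have pos2: "(\<Sum>j\<le>p. (x j - f x j)^2) > 0" if x: "x \<in> Bl" for x
  proof (rule ccontr)
    assume "\<not> ?thesis"
    moreover have "0 \<le> (\<Sum>j\<le>p. (x j - f x j)^2)" by (intro sum_nonneg) simp
    ultimately have z: "(\<Sum>j\<le>p. (x j - f x j)^2) = 0" by linarith
    have "f x = x"
    proof
      fix j show "f x j = x j"
        using sum_sq_zero[OF z, of j] fBi[OF x, of j] x unfolding Bl_def by (cases "j \<le> p") auto
    qed
    with nf x show False by blast
  qed
  define g where "g x = (\<lambda>i. (x i - f x i) / sqrt (\<Sum>j\<le>p. (x j - f x j)^2))" for x
  define h1 where "h1 z = (\<lambda>i. (snd z i - fst z * f (snd z) i) / sqrt (\<Sum>j\<le>p. (snd z j - fst z * f (snd z) j)^2))"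
    for z :: "real \<times> (nat \<Rightarrow> real)"
  have cf1: "continuous_on ({0..1} \<times> Sph) (\<lambda>z. f (snd z) i)" for i
  proof -
    have "continuous_on ({0..1} \<times> Sph) (\<lambda>z. f (snd z))"
      by (rule continuous_on_compose2[OF contf continuous_on_snd[OF continuous_on_id]]) (use SB in auto)
    then show ?thesis by (rule continuous_on_product_then_coordinatewise)
  qed
  have cx1: "continuous_on ({0..1} \<times> Sph) (\<lambda>z. snd z i)" for i
    by (rule continuous_on_product_then_coordinatewise[OF continuous_on_snd[OF continuous_on_id]])
  have ch1: "continuous_on ({0..1} \<times> Sph) h1"
    unfolding h1_def
    apply (rule continuous_on_coordinatewise_then_product)
    apply (intro continuous_on_divide continuous_on_diff continuous_on_mult continuous_on_fst continuous_on_id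
       cx1 cf1 continuous_on_sum continuous_on_power continuous_on_real_sqrt)
    using pos1 by fastforce
  have h1S: "h1 z \<in> Sph" if zin: "z \<in> {0..1} \<times> Sph" for z
  proof -
    obtain t x where z: "z = (t, x)" "t \<in> {0..1}" "x \<in> Sph" using zin by (cases z) auto
    have xB: "x \<in> Bl" using z SB by auto
    show ?thesis unfolding Sph_def h1_def z using sph_norm[OF pos1[OF z(2,3)]] z(3) fBi[OF xB]
      by (auto simp: Sph_def)
  qed
  have hom1: "homotopic_with_canon (\<lambda>_. True) Sph Sph id g"
  proof (rule homotopic_with[THEN iffD2], simp, intro exI[of _ h1] conjI ballI TrueI)
    show "continuous_map (prod_topology (top_of_set {0..1}) (top_of_set Sph)) (top_of_set Sph) h1"
      using ch1 h1S by auto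
    fix x assume x: "x \<in> topspace (top_of_set Sph)"
    then have "(\<Sum>j\<le>p. x j^2) = 1" by (simp add: Sph_def)
    then show "h1 (0, x) = id x" by (simp add: h1_def)
    show "h1 (1, x) = g x" by (simp add: h1_def g_def)
  qed
  have cxB: "continuous_on Bl (\<lambda>x. x i)" for i
    by (rule continuous_on_product_then_coordinatewise[OF continuous_on_id])
  have cfB: "continuous_on Bl (\<lambda>x. f x i)" for i
    by (rule continuous_on_product_then_coordinatewise[OF contf])
  have cg: "continuous_on Bl g"
    unfolding g_def
    apply (rule continuous_on_coordinatewise_then_product)
    apply (intro continuous_on_divide continuous_on_diff cxB cfB continuous_on_sum continuous_on_power continuous_on_real_sqrt)
    using pos2 by fastforce
  have gS: "g x \<in> Sph" if "x \<in> Bl" for x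
    unfolding Sph_def g_def using sph_norm[OF pos2[OF that]] that fBi[OF that]
    by (auto simp: Bl_def)
  define h2 where "h2 z = g (\<lambda>i. (1 - fst z) * snd z i)" for z :: "real \<times> (nat \<Rightarrow> real)"
  have sB: "(\<lambda>i. (1 - t) * x i) \<in> Bl" if "t \<in> {0..1}" "x \<in> Sph" for t x
  proof -
    have "(\<Sum>i\<le>p. ((1 - t) * x i)^2) = (1-t)^2 * (\<Sum>i\<le>p. x i^2)"
      by (simp add: power_mult_distrib sum_distrib_left)
    also have "\<dots> = (1-t)^2" using that(2) by (simp add: Sph_def)
    also have "\<dots> \<le> 1" using that(1) by (simp add: abs_square_le_1)
    finally show ?thesis using that(2) by (simp add: Bl_def Sph_def)
  qed
  have ch2: "continuous_on ({0..1} \<times> Sph) h2"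
    unfolding h2_def
    apply (rule continuous_on_compose2[OF cg])
     apply (rule continuous_on_coordinatewise_then_product)
     apply (intro continuous_on_mult continuous_on_diff continuous_on_const continuous_on_fst continuous_on_id cx1)
    using sB by auto
  have hom2: "homotopic_with_canon (\<lambda>_. True) Sph Sph g (\<lambda>_. g (\<lambda>i. 0))"
  proof (rule homotopic_with[THEN iffD2], simp, intro exI[of _ h2] conjI ballI TrueI)
    show "continuous_map (prod_topology (top_of_set {0..1}) (top_of_set Sph)) (top_of_set Sph) h2"
      using ch2 gS sB by (auto simp: h2_def)
    fix x assume x: "x \<in> topspace (top_of_set Sph)"
    show "h2 (0, x) = g x" by (simp add: h2_def)
    show "h2 (1, x) = g (\<lambda>i. 0)" by (simp add: h2_def)
  qed
  have "contractible Sph"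
    unfolding contractible_def using homotopic_with_trans[OF hom1 hom2] by blast
  then have "contractible_space (nsphere p)"
    by (simp add: nsphere_eq Sph_def)
  then show False using non_contractible_space_nsphere by blast
qed


definition simp_nat :: "nat \<Rightarrow> (nat \<Rightarrow> real) set" where
  "simp_nat n = {x. (\<forall>i<n. 0 \<le> x i) \<and> (\<Sum>i<n. x i) \<le> 1 \<and> (\<forall>i\<ge>n. x i = 0)}"

lemma simp_nat_ball:
  assumes "x \<in> simp_nat n"
  shows "(\<Sum>i\<le>n. x i^2) \<le> 1 \<and> (\<forall>i>n. x i = 0)"
proof -
  have nn: "\<And>i. i < n \<Longrightarrow> 0 \<le> x i" and s1: "(\<Sum>i<n. x i) \<le> 1" and z: "\<And>i. i \<ge> n \<Longrightarrow> x i = 0"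
    using assms by (auto simp: simp_nat_def)
  have le1: "x i \<le> 1" if "i < n" for i
  proof -
    have "x i \<le> (\<Sum>i<n. x i)" using that nn by (intro member_le_sum) auto
    then show ?thesis using s1 by linarith
  qed
  have "(\<Sum>i\<le>n. x i^2) = (\<Sum>i<n. x i^2)"
    using z[of n] by (simp add: lessThan_Suc_atMost[symmetric])
  also have "\<dots> \<le> (\<Sum>i<n. x i)"
  proof (intro sum_mono)
    fix i assume "i \<in> {..<n}"
    then have "0 \<le> x i" "x i \<le> 1" using nn le1 by auto
    then show "x i^2 \<le> x i" by (simp add: power2_eq_square mult_left_le)
  qed
  finally show ?thesis using s1 z by auto
qed

lemma brouwer_simplex_nat:
  fixes f :: "(nat \<Rightarrow> real) \<Rightarrow> (nat \<Rightarrow> real)"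
  assumes contf: "continuous_on (simp_nat n) f" and fS: "f ` simp_nat n \<subseteq> simp_nat n"
  shows "\<exists>x\<in>simp_nat n. f x = x"
proof -
  define Bl where "Bl = {x::nat\<Rightarrow>real. (\<Sum>i\<le>n. x i^2) \<le> 1 \<and> (\<forall>i>n. x i = 0)}"
  define r where "r x = (\<lambda>i. if i < n then max (x i) 0 / max 1 (\<Sum>j<n. max (x j) 0) else 0)"
    for x :: "nat \<Rightarrow> real"
  have cr: "continuous_on UNIV r"
    unfolding r_def
  proof (rule continuous_on_coordinatewise_then_product)
    fix i
    show "continuous_on UNIV (\<lambda>x::nat\<Rightarrow>real. if i < n then max (x i) 0 / max 1 (\<Sum>j<n. max (x j) 0) else 0)"
    proof (cases "i < n")
      case True
      have cc: "continuous_on UNIV (\<lambda>x::nat\<Rightarrow>real. x k)" for k by simp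
      show ?thesis using True
        by (simp, intro continuous_on_divide continuous_on_max continuous_on_const cc continuous_on_sum) 
           (auto simp: max_def)
    qed simp
  qed
  have rS: "r x \<in> simp_nat n" for x
  proof -
    have "(\<Sum>i<n. r x i) = (\<Sum>j<n. max (x j) 0) / max 1 (\<Sum>j<n. max (x j) 0)"
      by (simp add: r_def sum_divide_distrib)
    also have "\<dots> \<le> 1"
      by (auto simp: max_def divide_le_eq_1)
    finally show ?thesis by (auto simp: simp_nat_def r_def)
  qed
  have rid: "r x = x" if "x \<in> simp_nat n" for x
  proof -
    have nn: "\<And>i. i < n \<Longrightarrow> 0 \<le> x i" and s1: "(\<Sum>i<n. x i) \<le> 1" and z: "\<And>i. i \<ge> n \<Longrightarrow> x i = 0"
      using that by (auto simp: simp_nat_def)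
    have "(\<Sum>j<n. max (x j) 0) = (\<Sum>j<n. x j)" using nn by (intro sum.cong) auto
    then have "max 1 (\<Sum>j<n. max (x j) 0) = 1" using s1 by simp
    then have "r x i = x i" for i using nn[of i] z[of i] by (auto simp: r_def max_absorb1)
    then show ?thesis by (simp add: fun_eq_iff)
  qed
  have SB: "simp_nat n \<subseteq> Bl" using simp_nat_ball unfolding Bl_def by blast
  have "continuous_on Bl (f \<circ> r)"
    using continuous_on_compose2[OF contf cr] rS by (auto simp: comp_def intro: continuous_on_subset)
  moreover have "(f \<circ> r) ` Bl \<subseteq> Bl" using fS rS SB by auto
  ultimately obtain x where x: "x \<in> Bl" "f (r x) = x"
    using brouwer_ball_nat[of n "f \<circ> r"] unfolding Bl_def by auto
  have "x \<in> simp_nat n" using x fS rS by (metis image_subset_iff)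
  then show ?thesis using x rid by metis
qed


definition lam_nat :: "nat \<Rightarrow> (nat \<Rightarrow> real) \<Rightarrow> nat \<Rightarrow> real" where
  "lam_nat n x j = (if j < n then x j else 1 - (\<Sum>i<n. x i))"

lemma kkm_nat:
  fixes B :: "nat \<Rightarrow> (nat \<Rightarrow> real) set"
  assumes cl: "\<And>j. j \<le> n \<Longrightarrow> closed (B j)"
    and cov: "\<And>x. x \<in> simp_nat n \<Longrightarrow> \<exists>j\<le>n. lam_nat n x j > 0 \<and> x \<in> B j"
  shows "\<exists>x\<in>simp_nat n. \<forall>j\<le>n. x \<in> B j"
proof (rule ccontr)
  assume "\<not> ?thesis"
  then have nb: "\<And>x. x \<in> simp_nat n \<Longrightarrow> \<exists>j\<le>n. x \<notin> B j" by blast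
  define phi where "phi j x = (if B j = {} then 1 else infdist x (B j))" for j x
  have phi_nn: "0 \<le> phi j x" for j x by (simp add: phi_def infdist_nonneg)
  have phi_zero: "phi j x = 0 \<longleftrightarrow> x \<in> B j" if "j \<le> n" for j x
    using in_closure_iff_infdist_zero[of "B j" x] closure_closed[OF cl[OF that]]
    by (auto simp: phi_def)
  define S where "S x = (\<Sum>j\<le>n. phi j x)" for x
  have Spos: "S x > 0" if xs: "x \<in> simp_nat n" for x
  proof -
    obtain j where j: "j \<le> n" "x \<notin> B j" using nb[OF xs] by blast
    then have "phi j x > 0" using phi_zero[of j x] phi_nn[of j x] by linarith
    moreover have "phi j x \<le> S x" unfolding S_def using j phi_nn by (intro member_le_sum) auto
    ultimately show ?thesis by linarith
  qed
  have cphi: "continuous_on A (phi j)" for j A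
    by (cases "B j = {}") (auto simp: phi_def intro!: continuous_intros)
  define f where "f x = (\<lambda>i. if i < n then phi i x / S x else 0)" for x
  have cf: "continuous_on (simp_nat n) f"
    unfolding f_def
  proof (rule continuous_on_coordinatewise_then_product)
    fix i
    show "continuous_on (simp_nat n) (\<lambda>x. if i < n then phi i x / S x else 0)"
    proof (cases "i < n")
      case True
      have "continuous_on (simp_nat n) (\<lambda>x. phi i x / S x)"
        unfolding S_def
        by (intro continuous_on_divide cphi continuous_on_sum) (use Spos S_def in force)
      then show ?thesis using True by simp
    qed simp
  qed
  have fS: "f x \<in> simp_nat n" if "x \<in> simp_nat n" for x
  proof -
    have "(\<Sum>i<n. f x i) = (\<Sum>i<n. phi i x) / S x" by (simp add: f_def sum_divide_distrib)
    also have "\<dots> \<le> 1"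
    proof -
      have "(\<Sum>i<n. phi i x) \<le> S x" unfolding S_def
        by (intro sum_mono2) (auto simp: phi_nn)
      then show ?thesis using Spos[OF that] by simp
    qed
    finally show ?thesis using phi_nn Spos[OF that] by (auto simp: simp_nat_def f_def)
  qed
  obtain x where x: "x \<in> simp_nat n" "f x = x"
    using brouwer_simplex_nat[OF cf] fS by blast
  have lamx: "lam_nat n x j = phi j x / S x" if "j \<le> n" for j
  proof (cases "j < n")
    case True
    have "f x j = x j" using x(2) by simp
    then show ?thesis using True by (simp add: lam_nat_def f_def)
  next
    case False
    then have jn: "j = n" using that by simp
    have xi: "x i = phi i x / S x" if "i < n" for i
    proof -
      have "f x i = x i" using x(2) by simp
      then show ?thesis using that by (simp add: f_def)
    qed
    have "(\<Sum>i<n. x i) = (\<Sum>i<n. phi i x) / S x" by (simp add: xi sum_divide_distrib)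
    moreover have "S x = (\<Sum>i<n. phi i x) + phi n x" by (simp add: S_def lessThan_Suc_atMost[symmetric])
    ultimately show ?thesis using jn Spos[OF x(1)] by (simp add: lam_nat_def field_simps)
  qed
  obtain j where j: "j \<le> n" "lam_nat n x j > 0" "x \<in> B j" using cov[OF x(1)] by blast
  then show False using lamx[OF j(1)] phi_zero[OF j(1), of x] by simp
qed


lemma tvs_tendsto_scaleR:
  fixes v :: "'a \<Rightarrow> 'x::real_tvs"
  assumes "(a \<longlongrightarrow> c) F" "(v \<longlongrightarrow> w) F"
  shows "((\<lambda>x. a x *\<^sub>R v x) \<longlongrightarrow> c *\<^sub>R w) F"
proof -
  have "((\<lambda>x. (a x, v x)) \<longlongrightarrow> (c, w)) F" using assms by (rule tendsto_Pair)
  then have "filterlim (\<lambda>x. (a x, v x)) (nhds c \<times>\<^sub>F nhds w) F" by (simp add: nhds_prod)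
  from filterlim_compose[OF tvs_scaleR_continuous this] show ?thesis by simp
qed

lemma tvs_tendsto_add:
  fixes u v :: "'a \<Rightarrow> 'x::real_tvs"
  assumes "(u \<longlongrightarrow> c) F" "(v \<longlongrightarrow> w) F"
  shows "((\<lambda>x. u x + v x) \<longlongrightarrow> c + w) F"
proof -
  have "((\<lambda>x. (u x, v x)) \<longlongrightarrow> (c, w)) F" using assms by (rule tendsto_Pair)
  then have "filterlim (\<lambda>x. (u x, v x)) (nhds c \<times>\<^sub>F nhds w) F" by (simp add: nhds_prod)
  from filterlim_compose[OF tvs_add_continuous this] show ?thesis by simp
qed

lemma tvs_tendsto_sum:
  fixes f :: "'i \<Rightarrow> 'a \<Rightarrow> 'x::real_tvs"
  assumes "finite I" "\<And>i. i \<in> I \<Longrightarrow> (f i \<longlongrightarrow> l i) F"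
  shows "((\<lambda>x. \<Sum>i\<in>I. f i x) \<longlongrightarrow> (\<Sum>i\<in>I. l i)) F"
  using assms
proof (induction I rule: finite_induct)
  case empty
  then show ?case by simp
next
  case (insert i I)
  then show ?case by (simp add: tvs_tendsto_add)
qed

lemma tvs_continuous_on_sum_scaleR:
  fixes w :: "'i \<Rightarrow> 'x::real_tvs"
  assumes "finite I" "\<And>i. i \<in> I \<Longrightarrow> continuous_on S (a i)"
  shows "continuous_on S (\<lambda>x. \<Sum>i\<in>I. a i x *\<^sub>R w i)"
  unfolding continuous_on_def
proof
  fix x assume x: "x \<in> S"
  show "((\<lambda>x. \<Sum>i\<in>I. a i x *\<^sub>R w i) \<longlongrightarrow> (\<Sum>i\<in>I. a i x *\<^sub>R w i)) (at x within S)"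
    using assms x
    by (intro tvs_tendsto_sum tvs_tendsto_scaleR tendsto_const) (auto simp: continuous_on_def)
qed

lemma simp_nat_closed: "closed (simp_nat n)"
proof -
  have "simp_nat n = (\<Inter>i\<in>{..<n}. {x. 0 \<le> x i}) \<inter> {x. (\<Sum>i<n. x i) \<le> 1} \<inter> (\<Inter>i\<in>{n..}. {x. x i = 0})"
    by (auto simp: simp_nat_def)
  also have "closed \<dots>"
    by (intro closed_Int closed_INT ballI closed_Collect_le closed_Collect_eq continuous_on_sum
        continuous_on_const continuous_on_product_coordinates)
  finally show ?thesis .
qed

lemma simp_nat_compact: "compact (simp_nat n)"
proof -
  have "compactin (powertop_real UNIV) (PiE UNIV (\<lambda>i. {0..1::real}))"
    by (simp add: compactin_PiE)
  then have c: "compact (PiE UNIV (\<lambda>i. {0..1::real}))"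
    by (simp add: euclidean_product_topology)
  have "simp_nat n \<subseteq> PiE UNIV (\<lambda>i. {0..1::real})"
  proof
    fix x assume x: "x \<in> simp_nat n"
    have nn: "\<And>i. i < n \<Longrightarrow> 0 \<le> x i" and s1: "(\<Sum>i<n. x i) \<le> 1" and z: "\<And>i. i \<ge> n \<Longrightarrow> x i = 0"
      using x by (auto simp: simp_nat_def)
    have le1: "x i \<le> 1" if "i < n" for i
    proof -
      have "x i \<le> (\<Sum>i<n. x i)" using that nn by (intro member_le_sum) auto
      then show ?thesis using s1 by linarith
    qed
    show "x \<in> PiE UNIV (\<lambda>i. {0..1::real})"
      using nn le1 z by (auto simp: not_less) (metis linorder_not_le order.refl zero_le_one)+
  qed
  then have "simp_nat n = simp_nat n \<inter> PiE UNIV (\<lambda>i. {0..1::real})" by blast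
  then show ?thesis using closed_Int_compact[OF simp_nat_closed c] by metis
qed

lemma lam_nat_cont: "continuous_on S (\<lambda>x. lam_nat n x j)"
  unfolding lam_nat_def
  by (cases "j < n") (auto intro!: continuous_intros continuous_on_subset[OF continuous_on_product_coordinates])

lemma lam_nat_simp:
  assumes "x \<in> simp_nat n"
  shows "\<And>j. j \<le> n \<Longrightarrow> 0 \<le> lam_nat n x j" and "(\<Sum>j\<le>n. lam_nat n x j) = 1"
proof -
  show "\<And>j. j \<le> n \<Longrightarrow> 0 \<le> lam_nat n x j" using assms by (auto simp: lam_nat_def simp_nat_def)
  have "(\<Sum>j\<le>n. lam_nat n x j) = (\<Sum>j<n. lam_nat n x j) + lam_nat n x n"
    by (simp add: lessThan_Suc_atMost[symmetric])
  also have "(\<Sum>j<n. lam_nat n x j) = (\<Sum>j<n. x j)" by (intro sum.cong) (auto simp: lam_nat_def)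
  finally show "(\<Sum>j\<le>n. lam_nat n x j) = 1" by (simp add: lam_nat_def)
qed


theorem corollary2p4:
  fixes D :: "'x::real_tvs set" and K :: "'k set"
    and F :: "'x \<Rightarrow> 'k \<Rightarrow> 'y::real_tvs set"
    and G :: "'x \<Rightarrow> 'x \<Rightarrow> 'y set"
    and M :: "'x set" and y0 :: 'k
  assumes "D \<noteq> {}" and "convex D" and "K \<noteq> {}"
    and i: "\<forall>y\<in>K. compactly_closed {x\<in>D. 0 \<in> F x y}"
    and ii: "KKM_type G D"
    and iii: "\<forall>y\<in>K. \<exists>z\<in>D. \<forall>x\<in>D. 0 \<in> G z x \<longrightarrow> 0 \<in> F x y"
    and iv: "M \<noteq> {}" "compact M" "M \<subseteq> D" "y0 \<in> K" "\<forall>x\<in>D - M. 0 \<notin> F x y0"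
  shows "\<exists>xb\<in>M. \<forall>y\<in>K. 0 \<in> F xb y"
proof -
  define A where "A y = {x\<in>D. 0 \<in> F x y}" for y
  obtain z where z: "\<And>y. y \<in> K \<Longrightarrow> z y \<in> D" "\<And>y x. y \<in> K \<Longrightarrow> x \<in> D \<Longrightarrow> 0 \<in> G (z y) x \<Longrightarrow> 0 \<in> F x y"
    using iii by metis
  have fin: "\<exists>x. \<forall>y\<in>K'. x \<in> A y" if K': "finite K'" "K' \<noteq> {}" "K' \<subseteq> K" for K'
  proof -
    obtain n where n: "card K' = Suc n" using K' by (metis card_0_eq not0_implies_Suc)
    obtain e where e: "bij_betw e {0..<card K'} K'" using ex_bij_betw_nat_finite[OF K'(1)] by blast
    have e': "bij_betw e {..n} K'" using e n by (simp add: atLeast0LessThan lessThan_Suc_atMost)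
    have eK: "e j \<in> K" if "j \<le> n" for j using e' that K'(3) by (auto simp: bij_betw_def)
    define w where "w j = z (e j)" for j
    have wD: "w j \<in> D" if "j \<le> n" for j using z(1)[OF eK[OF that]] by (simp add: w_def)
    define h where "h x = (\<Sum>j\<le>n. lam_nat n x j *\<^sub>R w j)" for x
    have ch: "continuous_on (simp_nat n) h"
      unfolding h_def by (intro tvs_continuous_on_sum_scaleR lam_nat_cont) auto
    define C where "C = h ` simp_nat n"
    have cC: "compact C" unfolding C_def by (intro compact_continuous_image ch simp_nat_compact)
    define B where "B j = simp_nat n \<inter> h -` (A (e j) \<inter> C)" for j
    have clB: "closed (B j)" if "j \<le> n" for j
    proof -
      have "closedin (top_of_set C) (A (e j) \<inter> C)"
        using i eK[OF that] cC unfolding compactly_closed_def A_def by auto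
      then have "closedin (top_of_set (simp_nat n)) (B j)"
        unfolding B_def by (intro continuous_closedin_preimage_gen[OF ch]) (auto simp: C_def)
      then show ?thesis using closedin_closed_trans simp_nat_closed by blast
    qed
    have cov: "\<exists>j\<le>n. lam_nat n x j > 0 \<and> x \<in> B j" if x: "x \<in> simp_nat n" for x
    proof -
      define J where "J = {j. j \<le> n \<and> lam_nat n x j > 0}"
      have Jfin: "finite J" unfolding J_def by auto
      have Jsub: "J \<subseteq> {..n}" unfolding J_def by auto
      have sumJ: "(\<Sum>j\<in>J. lam_nat n x j) = 1"
      proof -
        have "(\<Sum>j\<in>J. lam_nat n x j) = (\<Sum>j\<le>n. lam_nat n x j)"
          using lam_nat_simp(1)[OF x] by (intro sum.mono_neutral_left) (auto simp: J_def less_le)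
        then show ?thesis using lam_nat_simp(2)[OF x] by simp
      qed
      then have Jne: "J \<noteq> {}" by auto
      have hJ: "h x = (\<Sum>j\<in>J. lam_nat n x j *\<^sub>R w j)"
        unfolding h_def
        using lam_nat_simp(1)[OF x] by (intro sum.mono_neutral_right) (auto simp: J_def less_le)
      have hconv: "h x \<in> convex hull (w ` J)"
        unfolding hJ
        using lam_nat_simp(1)[OF x] Jsub
        by (intro convex_sum[OF Jfin convex_convex_hull sumJ]) (auto intro: hull_inc)
      have wJD: "w ` J \<subseteq> D" using wD Jsub by auto
      have hD: "h x \<in> D"
        using hconv hull_minimal[of "w ` J" D convex, OF wJD \<open>convex D\<close>] by blast
      obtain xj where xj: "xj \<in> w ` J" "0 \<in> G xj (h x)"
        using ii unfolding KKM_type_def using Jfin Jne wJD hconv hD by (metis finite_imageI image_is_empty IntI)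
      then obtain j where j: "j \<in> J" "xj = w j" by blast
      have jn: "j \<le> n" using j Jsub by auto
      have "0 \<in> F (h x) (e j)" using z(2)[OF eK[OF jn] hD] xj j by (simp add: w_def)
      then have "x \<in> B j" using x hD by (auto simp: B_def A_def C_def)
      then show ?thesis using j jn by (auto simp: J_def)
    qed
    obtain x where x: "x \<in> simp_nat n" "\<forall>j\<le>n. x \<in> B j" using kkm_nat[OF clB cov] by blast
    show ?thesis
    proof (intro exI ballI)
      fix y assume "y \<in> K'"
      then obtain j where "j \<le> n" "y = e j" using e' by (auto simp: bij_betw_def)
      then show "h x \<in> A y" using x by (auto simp: B_def)
    qed
  qed
  have "\<forall>y\<in>K. \<exists>T. closed T \<and> A y \<inter> M = M \<inter> T"
  proof
    fix y assume "y \<in> K"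
    then have "closedin (top_of_set M) (A y \<inter> M)"
      using i iv(2) unfolding compactly_closed_def A_def by auto
    then show "\<exists>T. closed T \<and> A y \<inter> M = M \<inter> T" by (simp add: closedin_closed)
  qed
  then obtain T where T: "\<And>y. y \<in> K \<Longrightarrow> closed (T y)" "\<And>y. y \<in> K \<Longrightarrow> A y \<inter> M = M \<inter> T y"
    by metis
  have A0: "A y0 \<subseteq> M" using iv(5) unfolding A_def by auto
  have "M \<inter> (\<Inter>y\<in>K. T y) \<noteq> {}"
  proof (rule compact_imp_fip_image[OF iv(2) T(1)])
    fix K' assume K': "finite K'" "K' \<subseteq> K"
    obtain x where x: "\<forall>y\<in>insert y0 K'. x \<in> A y" using fin[of "insert y0 K'"] K' iv(4) by auto
    then have xM: "x \<in> M" using A0 by auto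
    have "x \<in> T y" if "y \<in> K'" for y using T(2)[of y] x xM that K' by auto
    then show "M \<inter> (\<Inter>y\<in>K'. T y) \<noteq> {}" using xM by auto
  qed auto
  then obtain xb where xb: "xb \<in> M" "\<And>y. y \<in> K \<Longrightarrow> xb \<in> T y" by auto
  have "0 \<in> F xb y" if "y \<in> K" for y
    using T(2)[OF that] xb(1) xb(2)[OF that] unfolding A_def by auto
  then show ?thesis using xb(1) by blast
qed

end
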